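(* Let $P\subseteq[0,1]^n$ be a polytope and $c\in\mathbb{R}^n$, and consider the instance $\mathcal{I}$: $\max\{c^\top x: x\in P\cap\{0,1\}^n\}$. Let $Q\subseteq[0,1]^{2n}$ be the convex hull of all points $(x,y)$ where $x$ is a vertex of $P$ and, for each $i$, $y_i=1$ if $x_i\in\{0,1\}$ and $y_i=0$ if $x_i\in(0,1)$. Let $BDG(\mathcal{I})$ be the instance $\max\{c^\top x:(x,y)\in Q,\ x\in\{0,1\}^n,\ y\in\{0,1\}^n\}$. Then $\{x:(x,y)\in Q\cap\{0,1\}^{2n}\}=P\cap\{0,1\}^n$ (so $BDG(\mathcal{I})$ is equivalent to $\mathcal{I}$), and there exists a branch-and-bound tree $\mathcal{T}^*(BDG(\mathcal{I}))$ that solves $BDG(\mathcal{I})$ with $|\mathcal{T}^*(BDG(\mathcal{I}))|\le 4n+1$.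
   Context: A branch-and-bound tree for a binary program over a polytope is a rooted binary tree in which each node corresponds to the polytope intersected with constraints fixing some variables to $0$ or $1$ (those fixed on the path from the root), and each internal node branches on one binary variable $z$, its two children adding $z=0$ and $z=1$ respectively. The tree solves the instance if at every leaf the LP relaxation is infeasible, or its optimal solution (an extreme point) is integral, or its value is no better than the best integral solution found at the leaves. $|\mathcal{T}|$ denotes the number of nodes. *)

theory Defs
  imports "HOL-Analysis.Analysis"
begin

text \<open>Generic branch-and-bound trees. Branching variables are indexed by type 'v; the
value of variable v at a point p of the ambient space is coord v p.\<close>

datatype 'v bbtree = Leaf | Branch 'v "'v bbtree" "'v bbtree"

fun bb_size :: "'v bbtree \<Rightarrow> nat" where
  "bb_size Leaf = 1"
| "bb_size (Branch v l r) = 1 + bb_size l + bb_size r"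

fun bb_leaf_regions :: "('v \<Rightarrow> 'a \<Rightarrow> real) \<Rightarrow> 'a set \<Rightarrow> 'v bbtree \<Rightarrow> 'a set set" where
  "bb_leaf_regions coord R Leaf = {R}"
| "bb_leaf_regions coord R (Branch v l r) =
     bb_leaf_regions coord (R \<inter> {p. coord v p = 0}) l \<union>
     bb_leaf_regions coord (R \<inter> {p. coord v p = 1}) r"

definition lp_optimal :: "('a \<Rightarrow> real) \<Rightarrow> 'a set \<Rightarrow> 'a \<Rightarrow> bool" where
  "lp_optimal f R p \<longleftrightarrow> p \<in> R \<and> (\<forall>q\<in>R. f q \<le> f p)"

definition lp_value :: "('a \<Rightarrow> real) \<Rightarrow> 'a set \<Rightarrow> real" where
  "lp_value f R = Sup (f ` R)"

definition bb_integral :: "('v \<Rightarrow> 'a \<Rightarrow> real) \<Rightarrow> 'a \<Rightarrow> bool" where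
  "bb_integral coord p \<longleftrightarrow> (\<forall>v. coord v p \<in> {0, 1})"

definition integral_leaf :: "('v \<Rightarrow> 'a::real_vector \<Rightarrow> real) \<Rightarrow> ('a \<Rightarrow> real) \<Rightarrow> 'a set \<Rightarrow> bool" where
  "integral_leaf coord f L \<longleftrightarrow>
     (\<exists>p. lp_optimal f L p \<and> p extreme_point_of L \<and> bb_integral coord p)"

definition bb_solves :: "('v \<Rightarrow> 'a::real_vector \<Rightarrow> real) \<Rightarrow> ('a \<Rightarrow> real) \<Rightarrow> 'a set \<Rightarrow> 'v bbtree \<Rightarrow> bool" where
  "bb_solves coord f R T \<longleftrightarrow>
     (\<forall>L \<in> bb_leaf_regions coord R T.
        L = {} \<or> integral_leaf coord f L \<or>
        (\<exists>L' \<in> bb_leaf_regions coord R T. integral_leaf coord f L' \<and> lp_value f L \<le> lp_value f L'))"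

text \<open>Variables of BDG: Inl i is x_i, Inr i is y_i.\<close>
definition bdg_coord :: "'n + 'n \<Rightarrow> (real^'n) \<times> (real^'n) \<Rightarrow> real" where
  "bdg_coord v p = (case v of Inl i \<Rightarrow> fst p $ i | Inr i \<Rightarrow> snd p $ i)"

definition binary_vec :: "real^'n \<Rightarrow> bool" where
  "binary_vec x \<longleftrightarrow> (\<forall>i. x $ i \<in> {0, 1})"

definition bdg_indicator :: "real^'n \<Rightarrow> real^'n" where
  "bdg_indicator x = (\<chi> i. if x $ i \<in> {0, 1} then 1 else 0)"

definition bdg_polytope :: "(real^'n) set \<Rightarrow> ((real^'n) \<times> (real^'n)) set" where
  "bdg_polytope P = convex hull {(x, bdg_indicator x) | x. x extreme_point_of P}"

end

theory Submission imports Defs begin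

lemma ip_snd: "((0::real^'n), axis i (1::real)) \<bullet> p = snd p $ i"
  by (cases p) (simp add: inner_commute[of "axis i 1"] inner_axis)
lemma ip_fst: "(axis i (1::real), (0::real^'n)) \<bullet> p = fst p $ i"
  by (cases p) (simp add: inner_commute[of "axis i 1"] inner_axis)
lemma cvx_fst: "convex ({p::(real^'n)\<times>(real^'n). 0 < fst p $ i} \<inter> {p. fst p $ i < (1::real)})"
  using convex_Int[OF convex_halfspace_gt[of 0 "(axis i (1::real), 0::real^'n)"]
                          convex_halfspace_lt[of "(axis i (1::real), 0::real^'n)" 1]]
  by (simp only: ip_fst)

lemma aux01:
  fixes u a b :: real
  assumes "0 < u" "u < 1" "0 \<le> a" "a \<le> 1" "0 \<le> b" "b \<le> 1" "(1-u)*a + u*b \<in> {0,1}"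
  shows "a = b"
proof -
  have "(1-u)*a \<ge> 0" "u*b \<ge> 0" "(1-u)*(1-a) \<ge> 0" "u*(1-b) \<ge> 0" using assms by auto
  show ?thesis
  proof (cases "(1-u)*a + u*b = 0")
    case True
    then have "(1-u)*a = 0" "u*b = 0" using \<open>(1-u)*a \<ge> 0\<close> \<open>u*b \<ge> 0\<close> by linarith+
    then show ?thesis using assms by auto
  next
    case False
    then have "(1-u)*a + u*b = 1" using assms by auto
    then have "(1-u)*(1-a) + u*(1-b) = 0" by (simp add: algebra_simps)
    then have "(1-u)*(1-a) = 0" "u*(1-b) = 0" using \<open>(1-u)*(1-a) \<ge> 0\<close> \<open>u*(1-b) \<ge> 0\<close> by linarith+
    then show ?thesis using assms by auto
  qed
qed

lemma binary_extreme:
  fixes P :: "(real^'n) set"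
  assumes box: "\<forall>x\<in>P. \<forall>i. 0 \<le> x $ i \<and> x $ i \<le> 1" and x: "x \<in> P" "binary_vec x"
  shows "x extreme_point_of P"
  unfolding extreme_point_of_def
proof (intro conjI ballI x(1) notI)
  fix a b assume ab: "a \<in> P" "b \<in> P" "x \<in> open_segment a b"
  then obtain u where u: "a \<noteq> b" "0 < u" "u < 1" "x = (1-u) *\<^sub>R a + u *\<^sub>R b"
    by (auto simp: in_segment)
  have "a $ i = b $ i" for i
  proof (rule aux01[OF u(2,3)])
    show "0 \<le> a $ i" "a $ i \<le> 1" "0 \<le> b $ i" "b $ i \<le> 1" using box ab by auto
    have "x $ i \<in> {0,1}" using x(2) by (auto simp: binary_vec_def)
    then show "(1-u) * a $ i + u * b $ i \<in> {0,1}" using u(4) by simp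
  qed
  then show False using u(1) by (simp add: vec_eq_iff)
qed

lemma face_extreme:
  fixes S :: "'a::euclidean_space set"
  assumes "finite S" "F face_of convex hull S"
  shows "F = convex hull {e. e extreme_point_of F}"
    and "\<And>e. e extreme_point_of F \<Longrightarrow> e \<in> S \<and> e \<in> F"
proof -
  have c: "compact (convex hull S)" "convex (convex hull S)"
    using assms(1) by (auto simp: compact_convex_hull finite_imp_compact)
  have "compact F" "convex F" using face_of_imp_compact[OF c(2,1) assms(2)] face_of_imp_convex[OF assms(2)] by auto
  then show "F = convex hull {e. e extreme_point_of F}" by (rule Krein_Milman_Minkowski)
  fix e assume "e extreme_point_of F"
  then show "e \<in> S \<and> e \<in> F" using extreme_point_of_face[OF assms(2)] extreme_point_of_convex_hull by blast
qed

fun mk :: "'n list \<Rightarrow> ('n + 'n) bbtree" where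
  "mk [] = Leaf"
| "mk (i # is) = Branch (Inr i) (Branch (Inl i) Leaf Leaf) (mk is)"

lemma mk_size: "bb_size (mk xs) = 4 * length xs + 1"
  by (induction xs) auto

lemma mk_leaves:
  "L \<in> bb_leaf_regions bdg_coord (Q \<inter> {p. \<forall>j\<in>J. snd p $ j = 1}) (mk xs) \<Longrightarrow>
   (\<exists>i b. (b = 0 \<or> b = 1) \<and> L \<subseteq> Q \<inter> {p. snd p $ i = 0 \<and> fst p $ i = b})
   \<or> L = Q \<inter> {p. \<forall>j\<in>J \<union> set xs. snd p $ j = 1}"
proof (induction xs arbitrary: J)
  case Nil
  then show ?case by simp
next
  case (Cons i xs)
  have eq: "Q \<inter> {p. \<forall>j\<in>J. snd p $ j = 1} \<inter> {p. bdg_coord (Inr i) p = 1}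
      = Q \<inter> {p. \<forall>j\<in>insert i J. snd p $ j = 1}"
    by (auto simp: bdg_coord_def)
  from Cons.prems consider
     "L = Q \<inter> {p. \<forall>j\<in>J. snd p $ j = 1} \<inter> {p. bdg_coord (Inr i) p = 0} \<inter> {p. bdg_coord (Inl i) p = 0}"
   | "L = Q \<inter> {p. \<forall>j\<in>J. snd p $ j = 1} \<inter> {p. bdg_coord (Inr i) p = 0} \<inter> {p. bdg_coord (Inl i) p = 1}"
   | "L \<in> bb_leaf_regions bdg_coord (Q \<inter> {p. \<forall>j\<in>insert i J. snd p $ j = 1}) (mk xs)"
    by (auto simp: eq)
  then show ?case
  proof cases
    case 1 then show ?thesis by (intro disjI1 exI[of _ i] exI[of _ 0]) (auto simp: bdg_coord_def)
  next
    case 2 then show ?thesis by (intro disjI1 exI[of _ i] exI[of _ 1]) (auto simp: bdg_coord_def)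
  next
    case 3
    from Cons.IH[OF this] show ?thesis by (auto simp: insert_commute)
  qed
qed

theorem proposition2p5:
  fixes P :: "(real^'n) set" and c :: "real^'n"
  assumes "polytope P"
    and "\<forall>x\<in>P. \<forall>i. 0 \<le> x $ i \<and> x $ i \<le> 1"
  shows "({x. \<exists>y. (x, y) \<in> bdg_polytope P \<and> binary_vec x \<and> binary_vec y}
           = P \<inter> {x. binary_vec x})
         \<and> (\<exists>T. bb_solves bdg_coord (\<lambda>p. c \<bullet> fst p) (bdg_polytope P) T
              \<and> bb_size T \<le> 4 * CARD('n) + 1)"
proof -
  define S where "S = {(x, bdg_indicator x) | x. x extreme_point_of P}"
  define Q where "Q = convex hull S"
  have Qdef: "bdg_polytope P = Q" by (simp add: Q_def S_def bdg_polytope_def)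
  obtain v where v: "finite v" "P = convex hull v" using assms(1) polytope_def by blast
  have "{x. x extreme_point_of P} \<subseteq> v" using v(2) extreme_point_of_convex_hull by blast
  then have finV: "finite {x. x extreme_point_of P}" using v(1) finite_subset by blast
  have "S = (\<lambda>x. (x, bdg_indicator x)) ` {x. x extreme_point_of P}" by (auto simp: S_def)
  then have finS: "finite S" using finV by simp
  have cQ: "convex Q" "compact Q" using finS by (auto simp: Q_def compact_convex_hull finite_imp_compact)
  have Sprops: "\<And>s. s \<in> S \<Longrightarrow> fst s \<in> P \<and> snd s = bdg_indicator (fst s) \<and> fst s extreme_point_of P"
    by (auto simp: S_def extreme_point_of_def)
  have yb: "\<And>p j. p \<in> Q \<Longrightarrow> 0 \<le> snd p $ j \<and> snd p $ j \<le> 1"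
  proof -
    fix p j assume "p \<in> Q"
    have "S \<subseteq> {p. 0 \<le> p \<bullet> (0, axis j 1)} \<inter> {p. p \<bullet> (0, axis j 1) \<le> 1}"
    proof
      fix s assume "s \<in> S"
      then have "snd s $ j = (if fst s $ j \<in> {0,1} then 1 else 0)"
        using Sprops by (simp add: bdg_indicator_def)
      then show "s \<in> {p. 0 \<le> p \<bullet> (0, axis j 1)} \<inter> {p. p \<bullet> (0, axis j 1) \<le> 1}"
        by (simp add: inner_Pair_0 inner_axis)
    qed
    moreover have "convex ({p. 0 \<le> p \<bullet> (0::real^'n, axis j (1::real))} \<inter> {p. p \<bullet> (0::real^'n, axis j (1::real)) \<le> 1})"
      using convex_Int[OF convex_halfspace_ge[of 0 "(0::real^'n, axis j (1::real))"]
                          convex_halfspace_le[of "(0::real^'n, axis j (1::real))" 1]]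
      by (simp add: inner_commute)
    ultimately have "Q \<subseteq> {p. 0 \<le> p \<bullet> (0, axis j 1)} \<inter> {p. p \<bullet> (0, axis j 1) \<le> 1}"
      unfolding Q_def by (rule hull_minimal)
    then show "0 \<le> snd p $ j \<and> snd p $ j \<le> 1" using \<open>p \<in> Q\<close> by (auto simp: inner_Pair_0 inner_axis)
  qed
  have part1: "{x. \<exists>y. (x, y) \<in> bdg_polytope P \<and> binary_vec x \<and> binary_vec y} = P \<inter> {x. binary_vec x}"
  proof
    have "Q \<subseteq> fst -` P"
      unfolding Q_def
      by (rule hull_minimal) (use Sprops v(2) in \<open>auto intro: convex_linear_vimage linear_fst\<close>)
    then show "{x. \<exists>y. (x, y) \<in> bdg_polytope P \<and> binary_vec x \<and> binary_vec y} \<subseteq> P \<inter> {x. binary_vec x}"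
      by (force simp: Qdef)
  next
    show "P \<inter> {x. binary_vec x} \<subseteq> {x. \<exists>y. (x, y) \<in> bdg_polytope P \<and> binary_vec x \<and> binary_vec y}"
    proof clarify
      fix x assume x: "x \<in> P" "binary_vec x"
      then have "x extreme_point_of P" using binary_extreme assms(2) by blast
      then have "(x, bdg_indicator x) \<in> Q" unfolding Q_def S_def by (intro hull_inc) blast
      moreover have "binary_vec (bdg_indicator x)" by (simp add: binary_vec_def bdg_indicator_def)
      ultimately show "\<exists>y. (x, y) \<in> bdg_polytope P \<and> binary_vec x \<and> binary_vec y" using x Qdef by blast
    qed
  qed
  have empty: "Q \<inter> {p. snd p $ i = 0 \<and> fst p $ i = b} = {}" if "b = 0 \<or> b = 1" for i b
  proof -
    define F where "F = Q \<inter> {p. ((0::real^'n), axis i (1::real)) \<bullet> p = 0}"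
    have Fface: "F face_of convex hull S" unfolding F_def Q_def[symmetric]
    proof (rule face_of_Int_supporting_hyperplane_ge)
      show "convex Q" by (rule cQ(1))
      fix p assume "p \<in> Q" then show "0 \<le> ((0::real^'n), axis i (1::real)) \<bullet> p"
        by (simp only: ip_snd yb)
    qed
    have "{e. e extreme_point_of F} \<subseteq> {p. 0 < fst p $ i} \<inter> {p. fst p $ i < 1}"
    proof (intro subsetI)
      fix e assume "e \<in> {e. e extreme_point_of F}"
      then have e: "e \<in> S" "e \<in> F" using face_extreme(2)[OF finS Fface] by auto
      then have "snd e $ i = 0" by (simp add: F_def ip_snd)
      then have "fst e $ i \<notin> {0,1}" using Sprops[OF e(1)] by (auto simp: bdg_indicator_def)
      moreover have "0 \<le> fst e $ i" "fst e $ i \<le> 1" using Sprops[OF e(1)] assms(2) by auto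
      ultimately show "e \<in> {p. 0 < fst p $ i} \<inter> {p. fst p $ i < 1}" by auto
    qed
    then have "convex hull {e. e extreme_point_of F} \<subseteq> {p. 0 < fst p $ i} \<inter> {p. fst p $ i < 1}"
      by (rule hull_minimal) (rule cvx_fst)
    then have "F \<subseteq> {p. 0 < fst p $ i} \<inter> {p. fst p $ i < 1}"
      by (subst face_extreme(1)[OF finS Fface])
    then show ?thesis using that by (auto simp: F_def ip_snd)
  qed
  define L where "L = Q \<inter> {p. \<forall>j. snd p $ j = 1}"
  have final: "L = {} \<or> integral_leaf bdg_coord (\<lambda>p. c \<bullet> fst p) L"
  proof (cases "L = {}")
    case False
    define a :: "(real^'n) \<times> (real^'n)" where "a = (0, \<chi> j. 1)"
    have ap: "a \<bullet> p = (\<Sum>j\<in>UNIV. snd p $ j)" for p by (cases p) (simp add: a_def inner_vec_def)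
    have cp: "(c, 0::real^'n) \<bullet> p = c \<bullet> fst p" for p by (cases p) simp
    have "L = Q \<inter> {p. a \<bullet> p = real CARD('n)}"
    proof (intro equalityI subsetI)
      fix p assume "p \<in> L" then show "p \<in> Q \<inter> {p. a \<bullet> p = real CARD('n)}"
        by (simp add: L_def ap)
    next
      fix p assume p: "p \<in> Q \<inter> {p. a \<bullet> p = real CARD('n)}"
      then have "(\<Sum>j\<in>UNIV. 1 - snd p $ j) = 0" by (simp add: ap sum_subtractf)
      moreover have "\<forall>j\<in>UNIV. 0 \<le> 1 - snd p $ j" using yb p by auto
      ultimately have "\<forall>j\<in>UNIV. 1 - snd p $ j = 0" using sum_nonneg_eq_0_iff[of UNIV "\<lambda>j. 1 - snd p $ j"] by simp
      then show "p \<in> L" using p by (simp add: L_def)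
    qed
    moreover have "\<And>p. p \<in> Q \<Longrightarrow> a \<bullet> p \<le> real CARD('n)"
    proof -
      fix p assume "p \<in> Q"
      have "(\<Sum>j\<in>UNIV. snd p $ j) \<le> (\<Sum>j\<in>(UNIV::'n set). 1)" by (rule sum_mono) (use yb \<open>p \<in> Q\<close> in auto)
      then show "a \<bullet> p \<le> real CARD('n)" by (simp add: ap)
    qed
    ultimately have Lface: "L face_of convex hull S"
      using face_of_Int_supporting_hyperplane_le[OF cQ(1)] Q_def by metis
    have cL: "compact L" "convex L"
      using face_of_imp_compact[OF cQ(1,2)] face_of_imp_convex Lface Q_def by auto
    have "compact ((\<lambda>p. (c, 0::real^'n) \<bullet> p) ` L)"
      by (rule compact_continuous_image) (use cL in \<open>auto intro: continuous_intros\<close>)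
    then obtain m where m: "m \<in> L" "\<And>q. q \<in> L \<Longrightarrow> (c, 0) \<bullet> q \<le> (c, 0) \<bullet> m"
      using compact_attains_sup[of "(\<lambda>p. (c, 0::real^'n) \<bullet> p) ` L"] False by auto
    define M where "M = L \<inter> {p. (c, 0) \<bullet> p = (c, 0) \<bullet> m}"
    have Mface: "M face_of L" unfolding M_def
      by (rule face_of_Int_supporting_hyperplane_le) (use cL m in auto)
    have cM: "compact M" "convex M"
      using face_of_imp_compact[OF cL(2,1) Mface] face_of_imp_convex[OF Mface] by auto
    have "M \<noteq> {}" using m by (auto simp: M_def)
    then have "{e. e extreme_point_of M} \<noteq> {}"
      by (metis Krein_Milman_Minkowski[OF cM] convex_hull_empty)
    then obtain e where eM: "e extreme_point_of M" by auto
    have eL: "e extreme_point_of L" "e \<in> M" using eM extreme_point_of_face[OF Mface] by auto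
    have eS: "e \<in> S" "e \<in> L" using face_extreme(2)[OF finS Lface eL(1)] by auto
    have "lp_optimal (\<lambda>p. c \<bullet> fst p) L e"
      using eL(2) m by (auto simp: lp_optimal_def M_def cp)
    moreover have "bb_integral bdg_coord e"
    proof -
      have "\<forall>j. snd e $ j = 1" using eS(2) by (simp add: L_def)
      moreover have "snd e = bdg_indicator (fst e)" using Sprops eS(1) by blast
      ultimately have "\<forall>j. fst e $ j \<in> {0,1}" by (auto simp: bdg_indicator_def split: if_splits)
      then show ?thesis using \<open>\<forall>j. snd e $ j = 1\<close>
        by (auto simp: bb_integral_def bdg_coord_def split: sum.splits)
    qed
    ultimately have "integral_leaf bdg_coord (\<lambda>p. c \<bullet> fst p) L"
      using eL(1) unfolding integral_leaf_def by blast
    then show ?thesis by blast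
  qed simp
  obtain xs :: "'n list" where xs: "distinct xs" "set xs = UNIV"
    using finite_distinct_list[OF finite_class.finite_UNIV] by metis
  have len: "length xs = CARD('n)" using xs distinct_card by fastforce
  have root: "Q \<inter> {p. \<forall>j\<in>{}. snd p $ j = 1} = bdg_polytope P" by (simp add: Qdef)
  have "bb_solves bdg_coord (\<lambda>p. c \<bullet> fst p) (bdg_polytope P) (mk xs)"
    unfolding bb_solves_def
  proof
    fix L' assume "L' \<in> bb_leaf_regions bdg_coord (bdg_polytope P) (mk xs)"
    then have "L' \<in> bb_leaf_regions bdg_coord (Q \<inter> {p. \<forall>j\<in>{}. snd p $ j = 1}) (mk xs)"
      by (simp only: root)
    from mk_leaves[OF this] have "L' = {} \<or> L' = L"
    proof
      assume "\<exists>i b. (b = 0 \<or> b = 1) \<and> L' \<subseteq> Q \<inter> {p. snd p $ i = 0 \<and> fst p $ i = b}"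
      then show ?thesis using empty by blast
    qed (simp add: L_def xs(2))
    then show "L' = {} \<or> integral_leaf bdg_coord (\<lambda>p. c \<bullet> fst p) L' \<or>
        (\<exists>L''\<in>bb_leaf_regions bdg_coord (bdg_polytope P) (mk xs).
            integral_leaf bdg_coord (\<lambda>p. c \<bullet> fst p) L'' \<and> lp_value (\<lambda>p. c \<bullet> fst p) L' \<le> lp_value (\<lambda>p. c \<bullet> fst p) L'')"
      using final by blast
  qed
  moreover have "bb_size (mk xs) \<le> 4 * CARD('n) + 1" by (simp add: mk_size len)
  ultimately show ?thesis using part1 by blast
qed

end
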